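(* Let $n\ge2$, let $\lambda_1\ge\dots\ge\lambda_n$ be real, and let $\mu_1\ge\dots\ge\mu_{n-1}$ be the critical points (with multiplicity) of $q(x)=\prod_{j=1}^n(x-\lambda_j)$. Then for every $r$ with $1\le r\le n-1$, $$(n-1)\sum_{j=1}^r\lambda_{j+1}+r\lambda_1\le n\sum_{j=1}^r\mu_j\le(n-1)\sum_{j=1}^r\lambda_j+r\lambda_{r+1}.$$ *)

theory Defs
  imports Complex_Main "HOL-Computational_Algebra.Polynomial"
begin

end

theory Submission
  imports Defs
begin


definition lprod :: "(nat \<Rightarrow> real) \<Rightarrow> nat \<Rightarrow> real poly" where
  "lprod a m = (\<Prod>j=1..m. [:-a j, 1:])"

lemma lprod_Suc: "lprod a (Suc m) = lprod a m * [:-a (Suc m), 1:]"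
  by (simp add: lprod_def)

lemma lprod_0[simp]: "lprod a 0 = 1"
  by (simp add: lprod_def)

lemma lprod_lead[simp]: "lead_coeff (lprod a m) = 1"
  by (simp add: lprod_def lead_coeff_prod)

lemma lprod_nz[simp]: "lprod a m \<noteq> 0"
  using lprod_lead[of a m] by (metis leading_coeff_0_iff zero_neq_one)

lemma lprod_degree[simp]: "degree (lprod a m) = m"
proof (induction m)
  case 0 then show ?case by simp
next
  case (Suc m)
  have "degree (lprod a m * [:-a (Suc m), 1:]) = degree (lprod a m) + degree [:-a (Suc m), 1:]"
    by (rule degree_mult_eq) auto
  then show ?case using Suc by (simp only: lprod_Suc) simp
qed

lemma lprod_poly: "poly (lprod a m) t = (\<Prod>j=1..m. t - a j)"
  by (simp add: lprod_def poly_prod)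

lemma order_lin: "order x [:-a, 1:] = (if x = a then 1 else 0)"
proof -
  have "order x ([:-a,1:]^1) = (if x = a then 1 else 0)"
  proof (cases "x = a")
    case True then show ?thesis using order_power_n_n[of a 1] by simp
  next
    case False then show ?thesis by (simp add: order_0I)
  qed
  then show ?thesis by simp
qed

lemma card_Suc_split: "card {j\<in>{1..Suc m}. a j = x} = card {j\<in>{1..m}. a j = x} + (if x = a (Suc m) then 1 else 0)"
proof -
  have e: "{j\<in>{1..Suc m}. a j = x} = {j\<in>{1..m}. a j = x} \<union> (if x = a (Suc m) then {Suc m} else {})"
    by (auto simp: le_Suc_eq)
  show ?thesis unfolding e by (auto simp: card_Un_disjoint)
qed

lemma lprod_order: "order x (lprod a m) = card {j\<in>{1..m}. a j = x}"
proof (induction m)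
  case 0 then show ?case by simp
next
  case (Suc m)
  have "order x (lprod a (Suc m)) = order x (lprod a m) + order x [:-a (Suc m), 1:]"
    unfolding lprod_Suc by (rule order_mult) (metis lprod_Suc lprod_nz)
  also have "\<dots> = card {j\<in>{1..m}. a j = x} + (if x = a (Suc m) then 1 else 0)"
    using Suc.IH order_lin[of x "a (Suc m)"] by simp
  also have "\<dots> = card {j\<in>{1..Suc m}. a j = x}" by (rule card_Suc_split[symmetric])
  finally show ?case .
qed

lemma lprod_coeff: "coeff (lprod a (Suc m)) m = - (\<Sum>j=1..Suc m. a j)"
proof (induction m)
  case 0 then show ?case by (simp add: lprod_def)
next
  case (Suc m)
  have "lprod a (Suc (Suc m)) = pCons 0 (lprod a (Suc m)) + smult (- a (Suc (Suc m))) (lprod a (Suc m))"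
    unfolding lprod_Suc[of a "Suc m"] by (simp add: mult.commute)
  then have "coeff (lprod a (Suc (Suc m))) (Suc m) = coeff (lprod a (Suc m)) m - a (Suc (Suc m)) * coeff (lprod a (Suc m)) (Suc m)"
    by simp
  also have "coeff (lprod a (Suc m)) (Suc m) = 1"
    using lprod_lead[of a "Suc m"] by simp
  finally show ?case using Suc by simp
qed

definition ivl :: "real set \<Rightarrow> bool" where
  "ivl I = (\<forall>x\<in>I. \<forall>z\<in>I. \<forall>y. x \<le> y \<longrightarrow> y \<le> z \<longrightarrow> y \<in> I)"

definition cnt :: "real poly \<Rightarrow> real set \<Rightarrow> nat" where
  "cnt p I = (\<Sum>x\<in>{x\<in>I. poly p x = 0}. order x p)"

lemma roots_fin:
  assumes "p \<noteq> 0" shows "finite {x\<in>I. poly p x = (0::real)}"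
proof -
  have "finite {x. poly p x = 0}" by (rule poly_roots_finite[OF assms])
  moreover have "{x\<in>I. poly p x = (0::real)} \<subseteq> {x. poly p x = 0}" by blast
  ultimately show ?thesis by (rule finite_subset[rotated])
qed

lemma cnt_ge_sum:
  assumes "p \<noteq> 0" "S \<subseteq> I" "finite S"
  shows "(\<Sum>x\<in>S. order x p) \<le> cnt p I"
proof -
  have "(\<Sum>x\<in>S. order x p) = (\<Sum>x\<in>{x\<in>S. poly p x = 0}. order x p)"
    by (rule sum.mono_neutral_right) (use assms(3) order_root in auto)
  also have "\<dots> \<le> cnt p I" unfolding cnt_def
    by (rule sum_mono2[OF roots_fin[OF assms(1)]]) (use assms(2) in auto)
  finally show ?thesis .
qed

lemma poly_rolle:
  fixes p :: "real poly"
  assumes "b < a" "poly p a = 0" "poly p b = 0"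
  obtains c where "b < c" "c < a" "poly (pderiv p) c = 0"
proof -
  obtain x where x: "b < x" "x < a" "poly p a - poly p b = (a - b) * poly (pderiv p) x"
    using poly_MVT[OF assms(1), of p] by blast
  then have "poly (pderiv p) x = 0" using assms by simp
  then show thesis using that x by blast
qed

lemma rolle_cnt_aux:
  fixes p :: "real poly"
  assumes "p \<noteq> 0"
  shows "ivl I \<Longrightarrow> card {x\<in>I. poly p x = 0} = m \<Longrightarrow> m \<ge> 1 \<Longrightarrow> cnt p I \<le> cnt (pderiv p) I + 1"
proof (induction m arbitrary: I)
  case 0 then show ?case by simp
next
  case (Suc m)
  define R where "R = {x\<in>I. poly p x = 0}"
  have finR: "finite R" unfolding R_def using roots_fin[OF assms] .
  have neR: "R \<noteq> {}" using Suc.prems(2) unfolding R_def[symmetric] by (metis card.empty nat.distinct(1))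
  define a where "a = Max R"
  have aR: "a \<in> R" using finR neR a_def by simp
  have aI: "a \<in> I" and pa: "poly p a = 0" using aR R_def by auto
  have amax: "\<And>x. x \<in> R \<Longrightarrow> x \<le> a" using finR a_def by simp
  have "degree p \<noteq> 0"
  proof
    assume "degree p = 0"
    then obtain c where "p = [:c:]" by (metis degree_eq_zeroE)
    then show False using pa assms by simp
  qed
  then have p'nz: "pderiv p \<noteq> 0" by (simp add: pderiv_eq_0_iff)
  have oa: "order a p = Suc (order a (pderiv p))" using order_pderiv[OF assms pa] .
  have cntR: "cnt p I = order a p + (\<Sum>x\<in>R - {a}. order x p)"
    unfolding cnt_def R_def[symmetric] using finR aR by (simp add: sum.remove)
  show ?case
  proof (cases "m = 0")
    case True
    then have "card R = 1" using Suc.prems R_def by simp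
    then have "R = {a}" using aR by (metis card_1_singletonE singletonD)
    then have "cnt p I = order a p" using cntR by simp
    moreover have "(\<Sum>x\<in>{a}. order x (pderiv p)) \<le> cnt (pderiv p) I"
      by (rule cnt_ge_sum) (use p'nz aI in auto)
    ultimately show ?thesis using oa by simp
  next
    case False
    define R' where "R' = R - {a}"
    have cardR': "card R' = m" using Suc.prems(2) R_def R'_def aR finR by simp
    have finR': "finite R'" using finR R'_def by simp
    have neR': "R' \<noteq> {}" using cardR' False by auto
    define b where "b = Max R'"
    have bR': "b \<in> R'" using finR' neR' b_def by simp
    have bmax: "\<And>x. x \<in> R' \<Longrightarrow> x \<le> b" using finR' b_def by simp
    have ba: "b < a" using bR' amax R'_def by force
    have bI: "b \<in> I" and pb: "poly p b = 0" using bR' R'_def R_def by auto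
    obtain c where bc: "b < c" "c < a" and pc: "poly (pderiv p) c = 0"
      using poly_rolle[OF ba pa pb] by blast
    have cI: "c \<in> I" using Suc.prems(1) aI bI bc unfolding ivl_def by (meson less_imp_le)
    define I2 where "I2 = I \<inter> {..b}"
    have ivl2: "ivl I2" using Suc.prems(1) unfolding ivl_def I2_def by auto
    have R2: "{x\<in>I2. poly p x = 0} = R'"
      using bmax amax ba unfolding I2_def R'_def R_def by force
    have IH: "cnt p I2 \<le> cnt (pderiv p) I2 + 1"
      using Suc.IH[OF ivl2] R2 cardR' False by simp
    have cp2: "cnt p I2 = (\<Sum>x\<in>R'. order x p)" unfolding cnt_def R2 ..
    define T where "T = {x\<in>I2. poly (pderiv p) x = 0}"
    have finT: "finite T" unfolding T_def using roots_fin[OF p'nz] .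
    have "(\<Sum>x\<in>insert a (insert c T). order x (pderiv p)) \<le> cnt (pderiv p) I"
      by (rule cnt_ge_sum) (use p'nz aI cI finT T_def I2_def in auto)
    moreover have "(\<Sum>x\<in>insert a (insert c T). order x (pderiv p))
        = order a (pderiv p) + order c (pderiv p) + cnt (pderiv p) I2"
      using finT bc ba unfolding T_def I2_def cnt_def by auto
    moreover have "order c (pderiv p) \<ge> 1"
      using pc p'nz order_root by (metis less_one not_le)
    ultimately show ?thesis using IH cp2 cntR oa R'_def by simp
  qed
qed

lemma rolle_cnt:
  fixes p :: "real poly"
  assumes "p \<noteq> 0" "ivl I" "cnt p I \<ge> 1"
  shows "cnt p I \<le> cnt (pderiv p) I + 1"
proof -
  have "{x\<in>I. poly p x = 0} \<noteq> {}" using assms(3) unfolding cnt_def by (intro notI) simp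
  then have "card {x\<in>I. poly p x = 0} \<ge> 1" using roots_fin[OF assms(1)]
    by (simp add: Suc_leI card_gt_0_iff)
  then show ?thesis by (rule rolle_cnt_aux[OF assms(1) assms(2) refl])
qed

lemma cnt_eq_sum:
  assumes "p \<noteq> 0" "finite S" "{x\<in>I. poly p x = 0} \<subseteq> S" "S \<subseteq> I"
  shows "cnt p I = (\<Sum>x\<in>S. order x p)"
  unfolding cnt_def
  by (rule sum.mono_neutral_left) (use assms order_root in auto)

lemma card_ne0:
  fixes a :: "nat \<Rightarrow> real" and m :: nat
  assumes "j \<in> {1..m}" "a j = x"
  shows "card {j\<in>{1..m}. a j = x} \<noteq> 0"
proof -
  have f: "finite {j\<in>{1..m}. a j = x}" by (rule finite_subset[of _ "{1..m}"]) auto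
  have "{j\<in>{1..m}. a j = x} \<noteq> {}" using assms by auto
  then show ?thesis using card_0_eq[OF f] by blast
qed

lemma cnt_conv:
  fixes p :: "real poly" and a :: "nat \<Rightarrow> real" and m :: nat
  assumes "p \<noteq> 0" "\<And>x. order x p = card {j\<in>{1..m}. a j = x}"
  shows "cnt p I = card {j\<in>{1..m}. a j \<in> I}"
proof -
  have R: "{x\<in>I. poly p x = 0} = a ` {j\<in>{1..m}. a j \<in> I}"
  proof (intro equalityI subsetI)
    fix x assume "x \<in> {x\<in>I. poly p x = 0}"
    then have "x \<in> I" "order x p \<noteq> 0" using order_root assms(1) by auto
    then have "card {j\<in>{1..m}. a j = x} \<noteq> 0" using assms(2) by simp
    then have "{j\<in>{1..m}. a j = x} \<noteq> {}" by (metis card.empty)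
    then obtain j where "j \<in> {1..m}" "a j = x" by blast
    then show "x \<in> a ` {j\<in>{1..m}. a j \<in> I}" using \<open>x \<in> I\<close> by auto
  next
    fix x assume "x \<in> a ` {j\<in>{1..m}. a j \<in> I}"
    then obtain j where j: "j \<in> {1..m}" "a j = x" "x \<in> I" by auto
    then have "card {j\<in>{1..m}. a j = x} \<noteq> 0" using card_ne0 by blast
    then have "order x p \<noteq> 0" using assms(2) by simp
    then show "x \<in> {x\<in>I. poly p x = 0}" using j order_root by auto
  qed
  define S where "S = {j\<in>{1..m}. a j \<in> I}"
  have finS: "finite S" unfolding S_def by simp
  have "cnt p I = (\<Sum>x\<in>a ` S. card {j\<in>{1..m}. a j = x})"
    unfolding cnt_def R S_def[symmetric] by (rule sum.cong[OF refl]) (rule assms(2))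
  also have "\<dots> = (\<Sum>x\<in>a ` S. (\<Sum>j\<in>S. if a j = x then 1 else 0))"
  proof (rule sum.cong[OF refl])
    fix x assume "x \<in> a ` S"
    then have "x \<in> I" unfolding S_def by auto
    then have e1: "{j\<in>{1..m}. a j = x} = {j\<in>S. a j = x}" unfolding S_def by auto
    have e2: "(\<Sum>j\<in>S. if a j = x then 1 else 0) = card {j\<in>S. a j = x}"
      using sum.inter_filter[OF finS, of "\<lambda>_. 1::nat" "\<lambda>j. a j = x"] by simp
    show "card {j\<in>{1..m}. a j = x} = (\<Sum>j\<in>S. if a j = x then 1 else 0)"
      unfolding e1 e2 ..
  qed
  also have "\<dots> = (\<Sum>j\<in>S. (\<Sum>x\<in>a ` S. if a j = x then 1 else 0))"
    by (rule sum.swap)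
  also have "\<dots> = (\<Sum>j\<in>S. 1)"
  proof (rule sum.cong[OF refl])
    fix j assume "j \<in> S"
    then have "a j \<in> a ` S" by blast
    then show "(\<Sum>x\<in>a ` S. if a j = x then 1 else 0) = (1::nat)"
      using sum.delta'[of "a ` S" "a j" "\<lambda>_. 1::nat"] finS by simp
  qed
  finally show ?thesis unfolding S_def by simp
qed

lemma prodform:
  fixes p :: "real poly"
  shows "p \<noteq> 0 \<Longrightarrow> degree p = m \<Longrightarrow> (\<And>x. order x p = card {j\<in>{1..m}. a j = x})
     \<Longrightarrow> p = smult (lead_coeff p) (lprod a m)"
proof (induction m arbitrary: p)
  case 0
  then obtain c where "p = [:c:]" by (metis degree_eq_zeroE)
  then show ?case by simp
next
  case (Suc m)
  define c where "c = a (Suc m)"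
  have "card {j\<in>{1..Suc m}. a j = c} \<noteq> 0" by (rule card_ne0[of "Suc m"]) (auto simp: c_def)
  then have "order c p \<noteq> 0" using Suc.prems(3)[of c] by simp
  then have "poly p c = 0" using order_root by blast
  then obtain p1 where p1: "p = p1 * [:-c, 1:]" by (metis dvdE mult.commute poly_eq_0_iff_dvd)
  have p1nz: "p1 \<noteq> 0" using Suc.prems(1) p1 by auto
  have "degree (p1 * [:-c,1:]) = degree p1 + degree [:-c,1:]" by (rule degree_mult_eq) (use p1nz in auto)
  then have dp1: "degree p1 = m" using Suc.prems(2) unfolding p1[symmetric] by simp
  have "\<And>x. order x p1 = card {j\<in>{1..m}. a j = x}"
  proof -
    fix x
    have "order x p = order x p1 + order x [:-c, 1:]" unfolding p1 by (rule order_mult) (use Suc.prems(1) p1 in simp)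
    then have "order x p1 + (if x = c then 1 else 0) = card {j\<in>{1..m}. a j = x} + (if x = a (Suc m) then 1 else 0)"
      using Suc.prems(3)[of x] card_Suc_split[of m a x] order_lin[of x c] by simp
    then show "order x p1 = card {j\<in>{1..m}. a j = x}" using c_def by simp
  qed
  then have "p1 = smult (lead_coeff p1) (lprod a m)" using Suc.IH p1nz dp1 by blast
  moreover have "lead_coeff p = lead_coeff p1" unfolding p1 lead_coeff_mult by simp
  ultimately show ?case unfolding p1 lprod_Suc c_def by (metis mult_smult_left)
qed

lemma sign_prod:
  fixes a :: "nat \<Rightarrow> real"
  assumes "finite J" "\<And>j. j \<in> J \<Longrightarrow> a j \<noteq> t"
  shows "(-1) ^ card {j\<in>J. t < a j} * (\<Prod>j\<in>J. t - a j) > 0"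
  using assms
proof (induction J rule: finite_induct)
  case empty then show ?case by simp
next
  case (insert j0 J)
  have IH: "(-1) ^ card {j\<in>J. t < a j} * (\<Prod>j\<in>J. t - a j) > 0" using insert by auto
  have ne: "a j0 \<noteq> t" using insert by auto
  have pr: "(\<Prod>j\<in>insert j0 J. t - a j) = (t - a j0) * (\<Prod>j\<in>J. t - a j)" using insert by simp
  show ?case
  proof (cases "t < a j0")
    case True
    then have "{j\<in>insert j0 J. t < a j} = insert j0 {j\<in>J. t < a j}" by auto
    then have "card {j\<in>insert j0 J. t < a j} = Suc (card {j\<in>J. t < a j})" using insert by simp
    then have "(-1) ^ card {j\<in>insert j0 J. t < a j} * (\<Prod>j\<in>insert j0 J. t - a j)
        = (a j0 - t) * ((-1) ^ card {j\<in>J. t < a j} * (\<Prod>j\<in>J. t - a j))"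
      unfolding pr by (simp only: power_Suc) (simp add: algebra_simps)
    then show ?thesis using IH True by simp
  next
    case False
    then have "{j\<in>insert j0 J. t < a j} = {j\<in>J. t < a j}" by auto
    then have "(-1) ^ card {j\<in>insert j0 J. t < a j} * (\<Prod>j\<in>insert j0 J. t - a j)
        = (t - a j0) * ((-1) ^ card {j\<in>J. t < a j} * (\<Prod>j\<in>J. t - a j))" using pr by simp
    then show ?thesis using IH False ne by simp
  qed
qed

lemma logderiv:
  assumes "\<And>j. j \<in> {1..m} \<Longrightarrow> a j \<noteq> t"
  shows "poly (pderiv (lprod a m)) t = poly (lprod a m) t * (\<Sum>i=1..m. 1 / (t - a i))"
proof -
  have "pderiv (lprod a m) = (\<Sum>i\<in>{1..m}. (\<Prod>k\<in>{1..m} - {i}. [:-a k, 1:]) * pderiv [:-a i, 1:])"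
    unfolding lprod_def by (rule pderiv_prod)
  then have "poly (pderiv (lprod a m)) t = (\<Sum>i\<in>{1..m}. (\<Prod>k\<in>{1..m} - {i}. t - a k))"
    by (simp add: poly_sum poly_prod pderiv_pCons)
  also have "\<dots> = (\<Sum>i\<in>{1..m}. (\<Prod>k\<in>{1..m}. t - a k) * (1 / (t - a i)))"
  proof (rule sum.cong[OF refl])
    fix i assume i: "i \<in> {1..m}"
    have "(\<Prod>k\<in>{1..m}. t - a k) = (t - a i) * (\<Prod>k\<in>{1..m} - {i}. t - a k)"
      using i by (simp add: prod.remove)
    then show "(\<Prod>k\<in>{1..m} - {i}. t - a k) = (\<Prod>k\<in>{1..m}. t - a k) * (1 / (t - a i))"
      using assms[OF i] by (simp add: field_simps)
  qed
  also have "\<dots> = poly (lprod a m) t * (\<Sum>i=1..m. 1 / (t - a i))"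
    by (simp add: lprod_poly sum_distrib_left)
  finally show ?thesis .
qed

lemma card_split_le:
  fixes a :: "nat \<Rightarrow> real" and m :: nat
  shows "card {j\<in>{1..m}. t < a j} + card {j\<in>{1..m}. a j \<in> {..t}} = m"
proof -
  have "card {j\<in>{1..m}. t < a j} + card {j\<in>{1..m}. a j \<in> {..t}} = card ({j\<in>{1..m}. t < a j} \<union> {j\<in>{1..m}. a j \<in> {..t}})"
    by (rule card_Un_disjoint[symmetric]) auto
  also have "{j\<in>{1..m}. t < a j} \<union> {j\<in>{1..m}. a j \<in> {..t}} = {1..m}" by auto
  finally show ?thesis by simp
qed

lemma pderiv_lprod_props:
  fixes lam :: "nat \<Rightarrow> real" and n :: nat
  assumes "n \<ge> 2"
  shows "pderiv (lprod lam n) \<noteq> 0" "degree (pderiv (lprod lam n)) = n - 1"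
    "lead_coeff (pderiv (lprod lam n)) = real n"
proof -
  show d: "degree (pderiv (lprod lam n)) = n - 1" by (simp add: degree_pderiv)
  show "pderiv (lprod lam n) \<noteq> 0" using assms by (simp add: pderiv_eq_0_iff)
  have "coeff (pderiv (lprod lam n)) (n - 1) = of_nat (Suc (n - 1)) * coeff (lprod lam n) (Suc (n - 1))"
    by (rule coeff_pderiv)
  also have "Suc (n - 1) = n" using assms by simp
  finally show "lead_coeff (pderiv (lprod lam n)) = real n" unfolding d
    using lprod_lead[of lam n] by simp
qed

lemma crit_prodform:
  fixes lam mu :: "nat \<Rightarrow> real" and n :: nat
  assumes "n \<ge> 2" "\<And>x. order x (pderiv (lprod lam n)) = card {j\<in>{1..n-1}. mu j = x}"
  shows "pderiv (lprod lam n) = smult (real n) (lprod mu (n - 1))"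
  using prodform[OF pderiv_lprod_props(1,2)[OF assms(1)] assms(2)] pderiv_lprod_props(3)[OF assms(1)]
  by simp

lemma crit_sum:
  fixes lam mu :: "nat \<Rightarrow> real" and n :: nat
  assumes "n \<ge> 2" "\<And>x. order x (pderiv (lprod lam n)) = card {j\<in>{1..n-1}. mu j = x}"
  shows "real n * (\<Sum>j=1..n-1. mu j) = real (n - 1) * (\<Sum>i=1..n. lam i)"
proof -
  obtain k where k: "n = Suc (Suc k)" using assms(1) by (metis add_2_eq_Suc le_Suc_ex)
  have "coeff (pderiv (lprod lam n)) k = of_nat (Suc k) * coeff (lprod lam n) (Suc k)"
    by (rule coeff_pderiv)
  also have "coeff (lprod lam n) (Suc k) = - (\<Sum>i=1..n. lam i)" unfolding k by (rule lprod_coeff)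
  finally have 1: "coeff (pderiv (lprod lam n)) k = - (real (Suc k) * (\<Sum>i=1..n. lam i))" by simp
  have "coeff (pderiv (lprod lam n)) k = real n * coeff (lprod mu (Suc k)) k"
    using crit_prodform[OF assms] k by simp
  also have "coeff (lprod mu (Suc k)) k = - (\<Sum>j=1..Suc k. mu j)" by (rule lprod_coeff)
  finally have 2: "coeff (pderiv (lprod lam n)) k = - (real n * (\<Sum>j=1..n-1. mu j))" using k by (simp add: algebra_simps)
  show ?thesis using 1 2 k by simp
qed

lemma crit_count:
  fixes lam mu :: "nat \<Rightarrow> real" and n :: nat
  assumes "n \<ge> 2" "\<And>x. order x (pderiv (lprod lam n)) = card {j\<in>{1..n-1}. mu j = x}"
  shows "card {j\<in>{1..n-1}. t < mu j} \<le> card {i\<in>{1..n}. t < lam i}"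
    and "card {i\<in>{1..n}. t < lam i} \<le> card {j\<in>{1..n-1}. t < mu j} + 1"
proof -
  have q'nz: "pderiv (lprod lam n) \<noteq> 0" by (rule pderiv_lprod_props(1)[OF assms(1)])
  have cq: "\<And>I. cnt (lprod lam n) I = card {i\<in>{1..n}. lam i \<in> I}"
    by (rule cnt_conv) (simp_all add: lprod_order)
  have cq': "\<And>I. cnt (pderiv (lprod lam n)) I = card {j\<in>{1..n-1}. mu j \<in> I}"
    by (rule cnt_conv[OF q'nz assms(2)])
  have iv1: "ivl {t<..}" unfolding ivl_def by auto
  have iv2: "ivl {..t}" unfolding ivl_def by auto
  have s1: "\<And>m (a::nat\<Rightarrow>real). {j\<in>{1..m}. a j \<in> {t<..}} = {j\<in>{1..m}. t < a j}" by auto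
  show "card {i\<in>{1..n}. t < lam i} \<le> card {j\<in>{1..n-1}. t < mu j} + 1"
  proof (cases "card {i\<in>{1..n}. t < lam i} = 0")
    case False
    then have c1: "card {i\<in>{1..n}. t < lam i} \<ge> 1" by linarith
    have "cnt (lprod lam n) {t<..} = card {i\<in>{1..n}. t < lam i}" using cq[of "{t<..}"] s1 by simp
    then have "cnt (lprod lam n) {t<..} \<ge> 1" using c1 by linarith
    from rolle_cnt[OF lprod_nz iv1 this] show ?thesis using cq cq' s1 by simp
  next
    case True then show ?thesis by linarith
  qed
  have A: "card {i\<in>{1..n}. t < lam i} + card {i\<in>{1..n}. lam i \<in> {..t}} = n" by (rule card_split_le)
  have B: "card {j\<in>{1..n-1}. t < mu j} + card {j\<in>{1..n-1}. mu j \<in> {..t}} = n - 1" by (rule card_split_le)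
  show "card {j\<in>{1..n-1}. t < mu j} \<le> card {i\<in>{1..n}. t < lam i}"
  proof (cases "card {i\<in>{1..n}. lam i \<in> {..t}} = 0")
    case True then show ?thesis using A B by linarith
  next
    case False
    then have "cnt (lprod lam n) {..t} \<ge> 1" using cq[of "{..t}"] by linarith
    from rolle_cnt[OF lprod_nz iv2 this] have "card {i\<in>{1..n}. lam i \<in> {..t}} \<le> card {j\<in>{1..n-1}. mu j \<in> {..t}} + 1"
      using cq cq' by simp
    then show ?thesis using A B by linarith
  qed
qed

lemma crit_sign:
  fixes lam mu :: "nat \<Rightarrow> real" and n :: nat
  assumes "n \<ge> 2" "\<And>x. order x (pderiv (lprod lam n)) = card {j\<in>{1..n-1}. mu j = x}"
    and tl: "\<And>i. i \<in> {1..n} \<Longrightarrow> lam i \<noteq> t" and tm: "\<And>j. j \<in> {1..n-1} \<Longrightarrow> mu j \<noteq> t"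
  shows "card {j\<in>{1..n-1}. t < mu j} = card {i\<in>{1..n}. t < lam i} \<Longrightarrow> (\<Sum>i=1..n. 1 / (t - lam i)) > 0"
    and "card {j\<in>{1..n-1}. t < mu j} + 1 = card {i\<in>{1..n}. t < lam i} \<Longrightarrow> (\<Sum>i=1..n. 1 / (t - lam i)) < 0"
proof -
  define S where "S = (\<Sum>i=1..n. 1 / (t - lam i))"
  define kl where "kl = card {i\<in>{1..n}. t < lam i}"
  define km where "km = card {j\<in>{1..n-1}. t < mu j}"
  have L: "(-1) ^ kl * poly (lprod lam n) t > 0"
    unfolding kl_def lprod_poly by (rule sign_prod) (use tl in auto)
  have M: "(-1) ^ km * (\<Prod>j=1..n-1. t - mu j) > 0"
    unfolding km_def by (rule sign_prod) (use tm in auto)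
  have D: "poly (pderiv (lprod lam n)) t = real n * (\<Prod>j=1..n-1. t - mu j)"
    using crit_prodform[OF assms(1,2)] by (simp add: lprod_poly)
  have E: "poly (pderiv (lprod lam n)) t = poly (lprod lam n) t * S"
    unfolding S_def by (rule logderiv) (use tl in auto)
  have npos: "real n > 0" using assms(1) by simp
  show "km = kl \<Longrightarrow> S > 0"
  proof -
    assume "km = kl"
    then have "((-1) ^ kl * poly (lprod lam n) t) * S = real n * ((-1) ^ km * (\<Prod>j=1..n-1. t - mu j))"
      using D E by (simp add: algebra_simps)
    also have "\<dots> > 0" using npos M by simp
    finally show "S > 0" using L by (simp add: zero_less_mult_iff)
  qed
  show "km + 1 = kl \<Longrightarrow> S < 0"
  proof -
    assume "km + 1 = kl"
    then have pw: "(-1::real) ^ kl = - ((-1) ^ km)" by auto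
    then have "((-1) ^ kl * poly (lprod lam n) t) * S = - (real n * ((-1) ^ km * (\<Prod>j=1..n-1. t - mu j)))"
      using D E pw by (simp add: algebra_simps)
    also have "\<dots> < 0" using npos M by simp
    finally have neg: "((-1) ^ kl * poly (lprod lam n) t) * S < 0" .
    show "S < 0"
    proof (rule ccontr)
      assume "\<not> S < 0"
      then have "S \<ge> 0" by simp
      then have "((-1) ^ kl * poly (lprod lam n) t) * S \<ge> 0" using L by simp
      then show False using neg by simp
    qed
  qed
qed

lemma construct:
  fixes p :: "real poly" and m :: nat
  shows "p \<noteq> 0 \<Longrightarrow> degree p = m \<Longrightarrow> cnt p UNIV \<ge> m \<Longrightarrow>
    \<exists>\<nu>. (\<forall>i j. 1 \<le> i \<longrightarrow> i \<le> j \<longrightarrow> j \<le> m \<longrightarrow> \<nu> j \<le> \<nu> i) \<and> (\<forall>x. order x p = card {j\<in>{1..m}. \<nu> j = x})"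
proof (induction m arbitrary: p)
  case 0
  then obtain c where pc: "p = [:c:]" by (metis degree_eq_zeroE)
  then have "c \<noteq> 0" using 0 by simp
  then have "\<forall>x. order x p = 0" using pc by (simp add: order_0I)
  then show ?case by simp
next
  case (Suc m)
  define R where "R = {x\<in>UNIV. poly p x = 0}"
  have finR: "finite R" unfolding R_def by (rule roots_fin[OF Suc.prems(1)])
  have "R \<noteq> {}"
  proof
    assume "R = {}"
    then have "cnt p UNIV = 0" unfolding cnt_def R_def[symmetric] by simp
    then show False using Suc.prems(3) by simp
  qed
  define c where "c = Min R"
  have cR: "c \<in> R" using finR \<open>R \<noteq> {}\<close> c_def by simp
  have cmin: "\<And>x. x \<in> R \<Longrightarrow> c \<le> x" using finR c_def by simp
  have "poly p c = 0" using cR R_def by simp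
  then obtain p1 where p1: "p = p1 * [:-c, 1:]" by (metis dvdE mult.commute poly_eq_0_iff_dvd)
  have p1nz: "p1 \<noteq> 0" using Suc.prems(1) p1 by auto
  have "degree (p1 * [:-c,1:]) = degree p1 + degree [:-c,1:]" by (rule degree_mult_eq) (use p1nz in auto)
  then have dp1: "degree p1 = m" using Suc.prems(2) unfolding p1[symmetric] by simp
  have ord: "\<And>x. order x p = order x p1 + (if x = c then 1 else 0)"
  proof -
    fix x
    have "order x p = order x p1 + order x [:-c, 1:]" unfolding p1 by (rule order_mult) (use Suc.prems(1) p1 in simp)
    then show "order x p = order x p1 + (if x = c then 1 else 0)" by (simp add: order_lin)
  qed
  have r1: "{x\<in>UNIV. poly p1 x = 0} \<subseteq> R" unfolding R_def p1 by auto
  have c1: "cnt p1 UNIV = (\<Sum>x\<in>R. order x p1)" by (rule cnt_eq_sum[OF p1nz finR r1]) simp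
  have "cnt p UNIV = (\<Sum>x\<in>R. order x p)" unfolding cnt_def R_def ..
  also have "\<dots> = (\<Sum>x\<in>R. order x p1) + (\<Sum>x\<in>R. if x = c then 1 else 0)"
    unfolding ord by (rule sum.distrib)
  also have "(\<Sum>x\<in>R. if x = c then 1 else (0::nat)) = 1" using sum.delta[OF finR, of c "\<lambda>_. 1::nat"] cR by simp
  finally have "cnt p UNIV = cnt p1 UNIV + 1" using c1 by simp
  then have "cnt p1 UNIV \<ge> m" using Suc.prems(3) by simp
  then obtain \<nu>' where mono': "\<forall>i j. 1 \<le> i \<longrightarrow> i \<le> j \<longrightarrow> j \<le> m \<longrightarrow> \<nu>' j \<le> \<nu>' i"
      and ord': "\<forall>x. order x p1 = card {j\<in>{1..m}. \<nu>' j = x}"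
    using Suc.IH[OF p1nz dp1] by blast
  define \<nu> where "\<nu> = \<nu>'(Suc m := c)"
  have ge: "c \<le> \<nu>' i" if "1 \<le> i" "i \<le> m" for i
  proof -
    have "card {j\<in>{1..m}. \<nu>' j = \<nu>' i} \<noteq> 0" by (rule card_ne0[of i]) (use that in auto)
    then have "order (\<nu>' i) p1 \<noteq> 0" using ord' by simp
    then have "poly p1 (\<nu>' i) = 0" using order_root by blast
    then have "\<nu>' i \<in> R" unfolding R_def p1 by simp
    then show ?thesis by (rule cmin)
  qed
  have "\<forall>i j. 1 \<le> i \<longrightarrow> i \<le> j \<longrightarrow> j \<le> Suc m \<longrightarrow> \<nu> j \<le> \<nu> i"
  proof (intro allI impI)
    fix i j assume ij: "1 \<le> i" "i \<le> j" "j \<le> Suc m"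
    show "\<nu> j \<le> \<nu> i"
    proof (cases "j = Suc m")
      case True
      then show ?thesis
      proof (cases "i = Suc m")
        case False
        then have "i \<le> m" using ij by simp
        then show ?thesis using True False ge[OF ij(1)] \<nu>_def by simp
      qed simp
    next
      case False
      then have "j \<le> m" using ij by simp
      then show ?thesis using mono' ij \<nu>_def by simp
    qed
  qed
  moreover have "\<forall>x. order x p = card {j\<in>{1..Suc m}. \<nu> j = x}"
  proof
    fix x
    have e: "{j\<in>{1..m}. \<nu> j = x} = {j\<in>{1..m}. \<nu>' j = x}" unfolding \<nu>_def by auto
    have "card {j\<in>{1..Suc m}. \<nu> j = x} = card {j\<in>{1..m}. \<nu> j = x} + (if x = \<nu> (Suc m) then 1 else 0)"
      by (rule card_Suc_split)
    also have "\<dots> = order x p1 + (if x = c then 1 else 0)" unfolding e using ord' \<nu>_def by simp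
    finally show "order x p = card {j\<in>{1..Suc m}. \<nu> j = x}" using ord by simp
  qed
  ultimately show ?case by blast
qed

lemma mono_crit:
  fixes lam lam' mu nu :: "nat \<Rightarrow> real" and n j :: nat
  assumes n2: "n \<ge> 2"
    and le: "\<And>i. i \<in> {1..n} \<Longrightarrow> lam i \<le> lam' i"
    and smu: "\<And>i j. 1 \<le> i \<Longrightarrow> i \<le> j \<Longrightarrow> j \<le> n - 1 \<Longrightarrow> mu j \<le> mu i"
    and snu: "\<And>i j. 1 \<le> i \<Longrightarrow> i \<le> j \<Longrightarrow> j \<le> n - 1 \<Longrightarrow> nu j \<le> nu i"
    and om: "\<And>x. order x (pderiv (lprod lam n)) = card {j\<in>{1..n-1}. mu j = x}"
    and on: "\<And>x. order x (pderiv (lprod lam' n)) = card {j\<in>{1..n-1}. nu j = x}"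
    and j: "1 \<le> j" "j \<le> n - 1"
  shows "mu j \<le> nu j"
proof (rule ccontr)
  assume "\<not> mu j \<le> nu j"
  then have lt: "nu j < mu j" by simp
  define F where "F = lam ` {1..n} \<union> lam' ` {1..n} \<union> mu ` {1..n-1} \<union> nu ` {1..n-1}"
  have finF: "finite F" unfolding F_def by simp
  have "infinite ({nu j<..<mu j} - F)" using infinite_Ioo[OF lt] finF by (rule Diff_infinite_finite[rotated])
  then obtain t where "t \<in> {nu j<..<mu j} - F" by (metis finite.emptyI ex_in_conv)
  then have t1: "nu j < t" and t2: "t < mu j" and tF: "t \<notin> F" by auto
  have tl: "\<And>i. i \<in> {1..n} \<Longrightarrow> lam i \<noteq> t" using tF unfolding F_def by auto
  have tl': "\<And>i. i \<in> {1..n} \<Longrightarrow> lam' i \<noteq> t" using tF unfolding F_def by auto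
  have tm: "\<And>i. i \<in> {1..n-1} \<Longrightarrow> mu i \<noteq> t" using tF unfolding F_def by auto
  have tn: "\<And>i. i \<in> {1..n-1} \<Longrightarrow> nu i \<noteq> t" using tF unfolding F_def by auto
  define km where "km = card {i\<in>{1..n-1}. t < mu i}"
  define kn where "kn = card {i\<in>{1..n-1}. t < nu i}"
  define kl where "kl = card {i\<in>{1..n}. t < lam i}"
  define kl' where "kl' = card {i\<in>{1..n}. t < lam' i}"
  have "{1..j} \<subseteq> {i\<in>{1..n-1}. t < mu i}"
  proof
    fix i assume "i \<in> {1..j}"
    then have "mu j \<le> mu i" "i \<le> n - 1" using smu[of i j] j by auto
    then show "i \<in> {i\<in>{1..n-1}. t < mu i}" using t2 \<open>i \<in> {1..j}\<close> by auto
  qed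
  then have "card {1..j} \<le> km" unfolding km_def by (rule card_mono[rotated]) simp
  then have kmj: "j \<le> km" by simp
  have "{i\<in>{1..n-1}. t < nu i} \<subseteq> {1..j-1}"
  proof
    fix i assume i: "i \<in> {i\<in>{1..n-1}. t < nu i}"
    have "i < j"
    proof (rule ccontr)
      assume "\<not> i < j"
      then have "nu i \<le> nu j" using snu[of j i] j i by auto
      then show False using i t1 by auto
    qed
    then show "i \<in> {1..j-1}" using i by auto
  qed
  then have "kn \<le> card {1..j-1}" unfolding kn_def by (rule card_mono[rotated]) simp
  then have knj: "kn \<le> j - 1" by simp
  have knkm: "kn < km" using kmj knj j by linarith
  have sub: "{i\<in>{1..n}. t < lam i} \<subseteq> {i\<in>{1..n}. t < lam' i}" using le by fastforce
  have kll: "kl \<le> kl'" unfolding kl_def kl'_def by (rule card_mono[OF _ sub]) simp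
  have c1: "km \<le> kl" "kl \<le> km + 1" using crit_count[OF n2 om, of t] unfolding km_def kl_def by auto
  have c2: "kn \<le> kl'" "kl' \<le> kn + 1" using crit_count[OF n2 on, of t] unfolding kn_def kl'_def by auto
  have eqs: "km = kl" "kl = kl'" "kn + 1 = kl'" using c1 c2 kll knkm by linarith+
  have seteq: "{i\<in>{1..n}. t < lam i} = {i\<in>{1..n}. t < lam' i}"
    by (rule card_subset_eq[OF _ sub]) (use eqs kl_def kl'_def in auto)
  have S: "(\<Sum>i=1..n. 1 / (t - lam i)) > 0"
    by (rule crit_sign(1)[OF n2 om tl tm]) (use eqs km_def kl_def in auto)
  have S': "(\<Sum>i=1..n. 1 / (t - lam' i)) < 0"
    by (rule crit_sign(2)[OF n2 on tl' tn]) (use eqs kn_def kl'_def in auto)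
  have "(\<Sum>i=1..n. 1 / (t - lam i)) \<le> (\<Sum>i=1..n. 1 / (t - lam' i))"
  proof (rule sum_mono)
    fix i assume i: "i \<in> {1..n}"
    have li: "lam i \<le> lam' i" using le[OF i] .
    have ne: "lam i \<noteq> t" "lam' i \<noteq> t" using tl[OF i] tl'[OF i] by auto
    have iff: "t < lam i \<longleftrightarrow> t < lam' i" using seteq i by blast
    show "1 / (t - lam i) \<le> 1 / (t - lam' i)"
    proof (cases "t < lam i")
      case True
      then have "t - lam' i \<le> t - lam i" "t - lam i < 0" using li by auto
      from le_imp_inverse_le_neg[OF this] show ?thesis by (simp add: inverse_eq_divide)
    next
      case False
      then have "lam i < t" "lam' i < t" using ne iff by auto
      then have "t - lam' i \<le> t - lam i" "0 < t - lam' i" using li by auto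
      from le_imp_inverse_le[OF this] show ?thesis by (simp add: inverse_eq_divide)
    qed
  qed
  then show False using S S' by linarith
qed

lemma get_nu:
  fixes lam' :: "nat \<Rightarrow> real" and n :: nat
  assumes n2: "n \<ge> 2"
  shows "\<exists>nu. (\<forall>i j. 1 \<le> i \<longrightarrow> i \<le> j \<longrightarrow> j \<le> n - 1 \<longrightarrow> nu j \<le> nu i)
     \<and> (\<forall>x. order x (pderiv (lprod lam' n)) = card {j\<in>{1..n-1}. nu j = x})"
proof -
  have c: "cnt (lprod lam' n) UNIV = card {i\<in>{1..n}. lam' i \<in> UNIV}"
    by (rule cnt_conv) (simp_all add: lprod_order)
  also have "{i\<in>{1..n}. lam' i \<in> UNIV} = {1..n}" by auto
  finally have c': "cnt (lprod lam' n) UNIV = n" by simp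
  have iv: "ivl UNIV" unfolding ivl_def by simp
  have "cnt (lprod lam' n) UNIV \<ge> 1" using c' n2 by simp
  from rolle_cnt[OF lprod_nz iv this] have "cnt (pderiv (lprod lam' n)) UNIV \<ge> n - 1" using c' by simp
  from construct[OF pderiv_lprod_props(1,2)[OF n2] this] show ?thesis .
qed

lemma all_in:
  fixes lam' nu :: "nat \<Rightarrow> real" and n :: nat
  assumes n2: "n \<ge> 2" and on: "\<And>x. order x (pderiv (lprod lam' n)) = card {j\<in>{1..n-1}. nu j = x}"
    and iv: "ivl I" and li: "\<And>i. i \<in> {1..n} \<Longrightarrow> lam' i \<in> I"
    and j: "j \<in> {1..n-1}"
  shows "nu j \<in> I"
proof -
  have "cnt (lprod lam' n) I = card {i\<in>{1..n}. lam' i \<in> I}"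
    by (rule cnt_conv) (simp_all add: lprod_order)
  also have "{i\<in>{1..n}. lam' i \<in> I} = {1..n}" using li by auto
  finally have c: "cnt (lprod lam' n) I = n" by simp
  have c': "cnt (pderiv (lprod lam' n)) I = card {j\<in>{1..n-1}. nu j \<in> I}"
    by (rule cnt_conv[OF pderiv_lprod_props(1)[OF n2] on])
  have "cnt (lprod lam' n) I \<ge> 1" using c n2 by simp
  from rolle_cnt[OF lprod_nz iv this] have "card {1..n-1} \<le> card {j\<in>{1..n-1}. nu j \<in> I}"
    using c c' by simp
  then have "{j\<in>{1..n-1}. nu j \<in> I} = {1..n-1}" by (intro card_seteq) auto
  then show ?thesis using j by blast
qed

lemma sum_split:
  fixes f :: "nat \<Rightarrow> real"
  assumes "r \<le> m"
  shows "(\<Sum>i=1..m. f i) = (\<Sum>i=1..r. f i) + (\<Sum>i=r+1..m. f i)"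
  using sum.ub_add_nat[of 1 r f "m - r"] assms by simp

theorem corollary2p5:
  fixes n :: nat and lam mu :: "nat \<Rightarrow> real" and r :: nat
  assumes "n \<ge> 2"
    and "\<And>i j. 1 \<le> i \<Longrightarrow> i \<le> j \<Longrightarrow> j \<le> n \<Longrightarrow> lam j \<le> lam i"
    and "\<And>i j. 1 \<le> i \<Longrightarrow> i \<le> j \<Longrightarrow> j \<le> n - 1 \<Longrightarrow> mu j \<le> mu i"
    and "\<And>x. order x (pderiv (\<Prod>j=1..n. [:- lam j, 1:]))
                 = card {j \<in> {1..n - 1}. mu j = x}"
    and "1 \<le> r" and "r \<le> n - 1"
  shows "real (n - 1) * (\<Sum>j=1..r. lam (j + 1)) + real r * lam 1 \<le> real n * (\<Sum>j=1..r. mu j)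
       \<and> real n * (\<Sum>j=1..r. mu j) \<le> real (n - 1) * (\<Sum>j=1..r. lam j) + real r * lam (r + 1)"
proof -
  note n2 = assms(1)
  note slam = assms(2)
  note smu = assms(3)
  have om: "\<And>x. order x (pderiv (lprod lam n)) = card {j\<in>{1..n-1}. mu j = x}"
    using assms(4) unfolding lprod_def .
  have r1: "1 \<le> r" and rn: "r \<le> n - 1" using assms(5,6) .
  define N where "N = real n"
  define R where "R = real r"
  have N1: "real (n - 1) = N - 1" using n2 N_def by (simp add: of_nat_diff)
  have sm: "N * (\<Sum>j=1..n-1. mu j) = (N - 1) * (\<Sum>i=1..n. lam i)"
    using crit_sum[OF n2 om] N1 N_def by simp
  have Npos: "N \<ge> 0" using N_def by simp
  have upper: "N * (\<Sum>j=1..r. mu j) \<le> (N - 1) * (\<Sum>j=1..r. lam j) + R * lam (r + 1)"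
  proof -
    define c where "c = lam (r + 1)"
    define lam' where "lam' = (\<lambda>i. if i \<le> r then lam i else c)"
    obtain nu where snu: "\<forall>i j. 1 \<le> i \<longrightarrow> i \<le> j \<longrightarrow> j \<le> n - 1 \<longrightarrow> nu j \<le> nu i"
        and on: "\<forall>x. order x (pderiv (lprod lam' n)) = card {j\<in>{1..n-1}. nu j = x}"
      using get_nu[OF n2, of lam'] by blast
    have le: "\<And>i. i \<in> {1..n} \<Longrightarrow> lam i \<le> lam' i"
      unfolding lam'_def c_def using slam by auto
    have mono: "\<And>j. j \<in> {1..n-1} \<Longrightarrow> mu j \<le> nu j"
      using mono_crit[OF n2 le smu _ om] snu on by auto
    have iv: "ivl {c..}" unfolding ivl_def by auto
    have lin: "\<And>i. i \<in> {1..n} \<Longrightarrow> lam' i \<in> {c..}"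
      unfolding lam'_def c_def using slam rn by auto
    have nuc: "\<And>j. j \<in> {1..n-1} \<Longrightarrow> c \<le> nu j"
      using all_in[of n lam' nu "{c..}", OF n2 _ iv lin] on by auto
    have sn: "N * (\<Sum>j=1..n-1. nu j) = (N - 1) * (\<Sum>i=1..n. lam' i)"
      using crit_sum[OF n2, of lam' nu] on N1 N_def by simp
    have "(\<Sum>i=1..n. lam' i) = (\<Sum>i=1..r. lam' i) + (\<Sum>i=r+1..n. lam' i)"
      by (rule sum_split) (use rn in simp)
    also have "(\<Sum>i=1..r. lam' i) = (\<Sum>i=1..r. lam i)" unfolding lam'_def by simp
    also have "(\<Sum>i=r+1..n. lam' i) = (\<Sum>i=r+1..n. c)" unfolding lam'_def by (rule sum.cong) auto
    also have "\<dots> = (N - R) * c" using rn n2 N_def R_def by (simp add: of_nat_diff)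
    finally have sl': "(\<Sum>i=1..n. lam' i) = (\<Sum>i=1..r. lam i) + (N - R) * c" .
    have "(\<Sum>j=1..n-1. nu j) = (\<Sum>j=1..r. nu j) + (\<Sum>j=r+1..n-1. nu j)"
      by (rule sum_split) (use rn in simp)
    moreover have "(\<Sum>j=r+1..n-1. nu j) \<ge> (\<Sum>j=r+1..n-1. c)"
      by (rule sum_mono) (use nuc r1 in auto)
    moreover have "(\<Sum>j=r+1..n-1. c) = (N - 1 - R) * c" using rn n2 N_def R_def by (simp add: of_nat_diff)
    ultimately have B: "(\<Sum>j=1..r. nu j) \<le> (\<Sum>j=1..n-1. nu j) - (N - 1 - R) * c" by linarith
    have A: "(\<Sum>j=1..r. mu j) \<le> (\<Sum>j=1..r. nu j)" by (rule sum_mono) (use mono rn in auto)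
    have "N * (\<Sum>j=1..r. mu j) \<le> N * ((\<Sum>j=1..n-1. nu j) - (N - 1 - R) * c)"
      using A B Npos by (meson mult_left_mono order_trans)
    also have "\<dots> = (N - 1) * ((\<Sum>i=1..r. lam i) + (N - R) * c) - N * ((N - 1 - R) * c)"
      using sn sl' by (simp add: right_diff_distrib)
    also have "\<dots> = (N - 1) * (\<Sum>j=1..r. lam j) + R * c" by (simp add: algebra_simps)
    finally show ?thesis using c_def by simp
  qed
  have lower: "(N - 1) * (\<Sum>j=1..r. lam (j + 1)) + R * lam 1 \<le> N * (\<Sum>j=1..r. mu j)"
  proof -
    define L where "L = lam 1"
    define lam' where "lam' = (\<lambda>i. if i \<le> r + 1 then L else lam i)"
    obtain nu where snu: "\<forall>i j. 1 \<le> i \<longrightarrow> i \<le> j \<longrightarrow> j \<le> n - 1 \<longrightarrow> nu j \<le> nu i"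
        and on: "\<forall>x. order x (pderiv (lprod lam' n)) = card {j\<in>{1..n-1}. nu j = x}"
      using get_nu[OF n2, of lam'] by blast
    have le: "\<And>i. i \<in> {1..n} \<Longrightarrow> lam i \<le> lam' i"
      unfolding lam'_def L_def using slam by auto
    have mono: "\<And>j. j \<in> {1..n-1} \<Longrightarrow> mu j \<le> nu j"
      using mono_crit[OF n2 le smu _ om] snu on by auto
    have iv: "ivl {..L}" unfolding ivl_def by auto
    have lin: "\<And>i. i \<in> {1..n} \<Longrightarrow> lam' i \<in> {..L}"
      unfolding lam'_def L_def using slam by auto
    have nuL: "\<And>j. j \<in> {1..n-1} \<Longrightarrow> nu j \<le> L"
      using all_in[of n lam' nu "{..L}", OF n2 _ iv lin] on by auto
    have "order L (lprod lam' n) = card {i\<in>{1..n}. lam' i = L}" by (rule lprod_order)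
    moreover have "{1..r+1} \<subseteq> {i\<in>{1..n}. lam' i = L}" unfolding lam'_def using rn n2 by auto
    then have "card {1..r+1} \<le> card {i\<in>{1..n}. lam' i = L}" by (rule card_mono[rotated]) simp
    ultimately have oL: "order L (lprod lam' n) \<ge> r + 1" by simp
    then have "poly (lprod lam' n) L = 0" using order_root by fastforce
    from order_pderiv[OF lprod_nz this] oL
    have "order L (pderiv (lprod lam' n)) \<ge> r" by simp
    then have cL: "card {j\<in>{1..n-1}. nu j = L} \<ge> r" using on by simp
    have nuEq: "nu j = L" if j: "j \<in> {1..r}" for j
    proof (rule ccontr)
      assume "nu j \<noteq> L"
      then have lt: "nu j < L" using nuL[of j] j rn by force
      have "{i\<in>{1..n-1}. nu i = L} \<subseteq> {1..j-1}"
      proof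
        fix i assume i: "i \<in> {i\<in>{1..n-1}. nu i = L}"
        have "i < j"
        proof (rule ccontr)
          assume "\<not> i < j"
          then have "nu i \<le> nu j" using snu j i by auto
          then show False using i lt by auto
        qed
        then show "i \<in> {1..j-1}" using i by auto
      qed
      then have "card {i\<in>{1..n-1}. nu i = L} \<le> card {1..j-1}" by (rule card_mono[rotated]) simp
      then show False using cL j by auto
    qed
    have nur: "(\<Sum>j=1..r. nu j) = R * L" using nuEq R_def by simp
    have sn: "N * (\<Sum>j=1..n-1. nu j) = (N - 1) * (\<Sum>i=1..n. lam' i)"
      using crit_sum[OF n2, of lam' nu] on N1 N_def by simp
    have rn1: "r + 1 \<le> n" using rn n2 by simp
    have "(\<Sum>i=1..n. lam' i) = (\<Sum>i=1..r+1. lam' i) + (\<Sum>i=r+1+1..n. lam' i)"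
      by (rule sum_split[OF rn1])
    also have "(\<Sum>i=1..r+1. lam' i) = (R + 1) * L" unfolding lam'_def using R_def by simp
    also have "(\<Sum>i=r+1+1..n. lam' i) = (\<Sum>i=r+1+1..n. lam i)" unfolding lam'_def by (rule sum.cong) auto
    finally have sl': "(\<Sum>i=1..n. lam' i) = (R + 1) * L + (\<Sum>i=r+1+1..n. lam i)" .
    have "(\<Sum>i=1..n. lam i) = (\<Sum>i=1..r+1. lam i) + (\<Sum>i=r+1+1..n. lam i)"
      by (rule sum_split[OF rn1])
    also have "(\<Sum>i=1..r+1. lam i) = L + (\<Sum>j=1..r. lam (j + 1))"
    proof -
      have "(\<Sum>i=1..Suc r. lam i) = lam 1 + (\<Sum>i=Suc 1..Suc r. lam i)"
        by (rule sum.atLeast_Suc_atMost) simp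
      also have "(\<Sum>i=Suc 1..Suc r. lam i) = (\<Sum>j=1..r. lam (Suc j))"
        by (rule sum.shift_bounds_cl_Suc_ivl)
      finally show ?thesis unfolding L_def by simp
    qed
    finally have sl: "(\<Sum>i=1..n. lam i) = L + (\<Sum>j=1..r. lam (j + 1)) + (\<Sum>i=r+1+1..n. lam i)" .
    have "(\<Sum>j=1..n-1. mu j) = (\<Sum>j=1..r. mu j) + (\<Sum>j=r+1..n-1. mu j)"
      by (rule sum_split) (use rn in simp)
    moreover have "(\<Sum>j=1..n-1. nu j) = (\<Sum>j=1..r. nu j) + (\<Sum>j=r+1..n-1. nu j)"
      by (rule sum_split) (use rn in simp)
    moreover have "(\<Sum>j=r+1..n-1. mu j) \<le> (\<Sum>j=r+1..n-1. nu j)"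
      by (rule sum_mono) (use mono r1 in auto)
    ultimately have "(\<Sum>j=1..r. mu j) \<ge> (\<Sum>j=1..n-1. mu j) - (\<Sum>j=1..n-1. nu j) + R * L"
      using nur by linarith
    then have "N * (\<Sum>j=1..r. mu j) \<ge> N * ((\<Sum>j=1..n-1. mu j) - (\<Sum>j=1..n-1. nu j) + R * L)"
      using Npos by (rule mult_left_mono)
    moreover have "N * ((\<Sum>j=1..n-1. mu j) - (\<Sum>j=1..n-1. nu j) + R * L)
        = (N - 1) * (\<Sum>i=1..n. lam i) - (N - 1) * (\<Sum>i=1..n. lam' i) + N * R * L"
      using sm sn by (simp add: algebra_simps)
    moreover have "\<dots> = (N - 1) * (\<Sum>j=1..r. lam (j + 1)) + R * L"
      unfolding sl sl' by (simp add: algebra_simps)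
    ultimately show ?thesis using L_def by simp
  qed
  show ?thesis using upper lower N1 N_def R_def by simp
qed

end
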